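(* In the setting of the context, the marginal density of $\alpha T$ is $$f_{\alpha T}(t)\propto t^{\alpha_0-1}e^{-(b_0/\alpha)t}\prod_{i=1}^d\frac1{((t))_{n_i}}\Big(\sum_{h=m}^{n}\frac{c_h}{((\alpha_0))_h}t^h\Big),\qquad t>0,$$ where $n=\sum_{i}n_i$, $m=\sum_{j=1}^km_{\bullet j}$, and $$c_h=\sum_{h_1+\dots+h_k=h,\ m_{\bullet j}\le h_j\le n_{\bullet j}}\ \prod_{j=1}^k\Gamma(h_j)\,S(n_{1j},\dots,n_{dj};h_j).$$
   Context: $((t))_n=\Gamma(t+n)/\Gamma(t)$. Setting: parameters $\alpha,\alpha_0,b_0>0$; integers $n_{ij}\ge0$ ($i=1,\dots,d$, $j=1,\dots,k$) with $n_i=\sum_jn_{ij}\ge1$ and $n_{\bullet j}=\sum_in_{ij}\ge1$; $m_{ij}=\min(1,n_{ij})$, $m_{\bullet j}=\sum_im_{ij}$. $\Delta^k=\{\mathbf v\in[0,1]^{k+1}:\sum_{j=0}^kv_j=1\}$. The pair $(\alpha T,\mathbf V)\in(0,\infty)\times\Delta^k$ has joint density $f_{\alpha T,\mathbf V}(t,\mathbf v)\propto t^{\alpha_0-1}e^{-(b_0/\alpha)t}v_0^{\alpha_0-1}\prod_{i=1}^d\frac1{((t))_{n_i}}\prod_{j=1}^k\big(v_j^{-1}\prod_{i=1}^d((tv_j))_{n_{ij}}\big)$ (w.r.t. Lebesgue measure in $t$ and $(v_1,\dots,v_k)$). With $S(q,h)$ the unsigned Stirling numbers of the first kind, $S(q_1,\dots,q_d;h)=\sum_{h_1+\dots+h_d=h,\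 0\le h_i\le q_i}\prod_iS(q_i,h_i)$. *)

theory Defs
  imports "HOL-Analysis.Analysis" "HOL-Combinatorics.Stirling"
begin

text \<open>Rising factorial ((t))_n = Gamma(t+n)/Gamma(t) is the library's pochhammer t n.
  Counts are indexed n_cnt i j with i in {1..d}, j in {1..k}.\<close>

definition rowsum :: "(nat \<Rightarrow> nat \<Rightarrow> nat) \<Rightarrow> nat \<Rightarrow> nat \<Rightarrow> nat" where
  "rowsum nc k i = (\<Sum>j\<in>{1..k}. nc i j)"

definition colsum :: "(nat \<Rightarrow> nat \<Rightarrow> nat) \<Rightarrow> nat \<Rightarrow> nat \<Rightarrow> nat" where
  "colsum nc d j = (\<Sum>i\<in>{1..d}. nc i j)"

definition colmin :: "(nat \<Rightarrow> nat \<Rightarrow> nat) \<Rightarrow> nat \<Rightarrow> nat \<Rightarrow> nat" where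
  "colmin nc d j = (\<Sum>i\<in>{1..d}. min 1 (nc i j))"

definition stirling_multi :: "nat \<Rightarrow> (nat \<Rightarrow> nat) \<Rightarrow> nat \<Rightarrow> nat" where
  "stirling_multi d q h =
     (\<Sum>hs\<in>{hs \<in> PiE {1..d} (\<lambda>i. {0..q i}). (\<Sum>i\<in>{1..d}. hs i) = h}.
        \<Prod>i\<in>{1..d}. stirling (q i) (hs i))"

definition coeff_c :: "(nat \<Rightarrow> nat \<Rightarrow> nat) \<Rightarrow> nat \<Rightarrow> nat \<Rightarrow> nat \<Rightarrow> real" where
  "coeff_c nc d k h =
     (\<Sum>hs\<in>{hs \<in> PiE {1..k} (\<lambda>j. {colmin nc d j..colsum nc d j}). (\<Sum>j\<in>{1..k}. hs j) = h}.
        \<Prod>j\<in>{1..k}. Gamma (real (hs j)) * real (stirling_multi d (\<lambda>i. nc i j) (hs j)))"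

text \<open>Unnormalised joint density of (alpha T, V), as a function of t and (v_1,...,v_k),
  with v_0 = 1 - (v_1+...+v_k); zero outside the simplex.\<close>
definition joint_dens ::
  "real \<Rightarrow> real \<Rightarrow> real \<Rightarrow> (nat \<Rightarrow> nat \<Rightarrow> nat) \<Rightarrow> nat \<Rightarrow> nat \<Rightarrow> real \<Rightarrow> (nat \<Rightarrow> real) \<Rightarrow> real" where
  "joint_dens \<alpha> \<alpha>0 b0 nc d k t v =
     (if (\<forall>j\<in>{1..k}. 0 \<le> v j) \<and> (\<Sum>j\<in>{1..k}. v j) \<le> 1 then
        t powr (\<alpha>0 - 1) * exp (- (b0 / \<alpha>) * t) * (1 - (\<Sum>j\<in>{1..k}. v j)) powr (\<alpha>0 - 1)
        * (\<Prod>i\<in>{1..d}. 1 / pochhammer t (rowsum nc k i))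
        * (\<Prod>j\<in>{1..k}. inverse (v j) * (\<Prod>i\<in>{1..d}. pochhammer (t * v j) (nc i j)))
      else 0)"

definition marg_dens ::
  "real \<Rightarrow> real \<Rightarrow> real \<Rightarrow> (nat \<Rightarrow> nat \<Rightarrow> nat) \<Rightarrow> nat \<Rightarrow> nat \<Rightarrow> real \<Rightarrow> real" where
  "marg_dens \<alpha> \<alpha>0 b0 nc d k t =
     t powr (\<alpha>0 - 1) * exp (- (b0 / \<alpha>) * t)
     * (\<Prod>i\<in>{1..d}. 1 / pochhammer t (rowsum nc k i))
     * (\<Sum>h\<in>{(\<Sum>j\<in>{1..k}. colmin nc d j)..(\<Sum>i\<in>{1..d}. rowsum nc k i)}.
          coeff_c nc d k h / pochhammer \<alpha>0 h * t ^ h)"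

end

theory Submission
  imports Defs
begin


lemma beta_unit:
  fixes p q :: real assumes p: "p > 0" and q: "q > 0"
  shows "(\<integral>\<^sup>+u. ennreal (indicator {0..1} u * (u powr (p-1) * (1-u) powr (q-1))) \<partial>lborel) = ennreal (Beta p q)"
proof -
  have "((\<lambda>u. indicator {0..1} u * (u powr (p-1) * (1-u) powr (q-1))) has_integral Beta p q) UNIV"
  proof -
    have eq: "(\<lambda>u. indicator {0..1} u * (u powr (p-1) * (1-u) powr (q-1))) = (\<lambda>u. if u \<in> {0..1::real} then u powr (p-1) * (1-u) powr (q-1) else 0)"
      by (auto simp: indicator_def fun_eq_iff)
    show ?thesis unfolding eq has_integral_restrict_UNIV using has_integral_Beta_real[OF p q] .
  qed
  then show ?thesis
    by (intro nn_integral_has_integral_lborel) (auto simp: indicator_def)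
qed

lemma beta_scaled:
  fixes p q s :: real assumes p: "p > 0" and q: "q > 0" and s: "s \<ge> 0"
  shows "(\<integral>\<^sup>+y. ennreal (indicator {0..s} y * y powr (p-1) * (s-y) powr (q-1)) \<partial>lborel)
     = ennreal (s powr (p+q-1) * Beta p q)"
proof (cases "s = 0")
  case True
  have "(\<lambda>y. ennreal (indicator {0..s} y * y powr (p-1) * (s-y) powr (q-1))) = (\<lambda>y. 0)"
    by (auto simp: True indicator_def fun_eq_iff)
  then show ?thesis by (simp add: True)
next
  case False
  with s have s: "s > 0" by simp
  have "(\<integral>\<^sup>+y. ennreal (indicator {0..s} y * y powr (p-1) * (s-y) powr (q-1)) \<partial>lborel)
      = ennreal \<bar>s\<bar> * (\<integral>\<^sup>+u. ennreal (indicator {0..s} (0 + s*u) * (0 + s*u) powr (p-1) * (s-(0 + s*u)) powr (q-1)) \<partial>lborel)"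
    using s by (intro nn_integral_real_affine) auto
  also have "(\<integral>\<^sup>+u. ennreal (indicator {0..s} (0 + s*u) * (0 + s*u) powr (p-1) * (s-(0 + s*u)) powr (q-1)) \<partial>lborel)
     = (\<integral>\<^sup>+u. ennreal (s powr (p+q-2)) * ennreal (indicator {0..1} u * (u powr (p-1) * (1-u) powr (q-1))) \<partial>lborel)"
  proof (intro nn_integral_cong)
    fix u :: real
    show "ennreal (indicator {0..s} (0 + s*u) * (0 + s*u) powr (p-1) * (s-(0 + s*u)) powr (q-1))
       = ennreal (s powr (p+q-2)) * ennreal (indicator {0..1} u * (u powr (p-1) * (1-u) powr (q-1)))"
    proof (cases "u \<in> {0..1}")
      case True
      have e: "s - s*u = s * (1-u)" by (simp add: algebra_simps)
      have u0: "0 \<le> u" "u \<le> 1" using True by auto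
      have ind: "indicator {0..s} (0 + s*u) = (1::real)" "indicator {0..1} u = (1::real)"
        using u0 s by (auto simp: indicator_def mult_le_cancel_left1)
      have "s powr (p-1) * s powr (q-1) = s powr (p+q-2)" using s by (simp add: powr_add[symmetric])
      moreover have "(s*u) powr (p-1) = s powr (p-1) * u powr (p-1)" using s u0 by (simp add: powr_mult)
      moreover have "(s*(1-u)) powr (q-1) = s powr (q-1) * (1-u) powr (q-1)" using s u0 by (simp add: powr_mult)
      ultimately have "(0 + s*u) powr (p-1) * (s-(0 + s*u)) powr (q-1) = s powr (p+q-2) * (u powr (p-1) * (1-u) powr (q-1))"
        unfolding e by (simp add: algebra_simps)
      then show ?thesis unfolding ind by (simp add: ennreal_mult'[symmetric])
    next
      case False
      then have "s*u \<notin> {0..s}" using s by (auto simp: zero_le_mult_iff mult_le_cancel_left1)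
      then have "indicator {0..s} (0+s*u) = (0::real)" "indicator {0..1} u = (0::real)" using False by auto
      then show ?thesis by simp
    qed
  qed
  also have "\<dots> = ennreal (s powr (p+q-2)) * ennreal (Beta p q)"
    by (subst nn_integral_cmult) (auto simp: beta_unit[OF p q])
  also have "ennreal \<bar>s\<bar> * (ennreal (s powr (p+q-2)) * ennreal (Beta p q)) = ennreal (s powr (p+q-1) * Beta p q)"
  proof -
    have "s * s powr (p+q-2) = s powr (p+q-1)" using s by (simp add: powr_add[symmetric] powr_mult_base)
    moreover have "Beta p q \<ge> 0" using p q by (simp add: Beta_altdef rGamma_inverse_Gamma)
    ultimately show ?thesis using s by (simp add: ennreal_mult''[symmetric] mult.assoc)
  qed
  finally show ?thesis .
qed
definition splx :: "'a set \<Rightarrow> real \<Rightarrow> ('a \<Rightarrow> real) set" where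
  "splx A t = {x. (\<forall>i\<in>A. 0 \<le> x i) \<and> sum x A \<le> t}"

definition dirf :: "'a set \<Rightarrow> real \<Rightarrow> ('a \<Rightarrow> real) \<Rightarrow> real \<Rightarrow> ('a \<Rightarrow> real) \<Rightarrow> real" where
  "dirf I a b s v = indicator (splx I s) v * (s - sum v I) powr (a-1) * (\<Prod>j\<in>I. v j powr (b j - 1))"

lemma dirf_nonneg: "dirf I a b s v \<ge> 0"
  unfolding dirf_def by (intro mult_nonneg_nonneg prod_nonneg) auto

lemma splx_step:
  assumes "b \<notin> A" "finite A"
  shows   "x(b := y) \<in> splx (insert b A) t \<longleftrightarrow> y \<in> {0..t} \<and> x \<in> splx A (t - y)"
  using assms sum_nonneg[of A x] unfolding splx_def
  by (force simp: sum_delta_notmem algebra_simps)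

lemma dirf_meas [measurable]:
  assumes "finite I"
  shows "(\<lambda>v. ennreal (dirf I a b s v)) \<in> borel_measurable (PiM I (\<lambda>_. lborel))"
proof -
  have "splx I s \<inter> space (Pi\<^sub>M I (\<lambda>_. lborel)) =
            Pi\<^sub>E I (\<lambda>_. {0..}) \<inter> (\<lambda>x. sum x I) -` {..s} \<inter> space (Pi\<^sub>M I (\<lambda>_. lborel))"
    by (auto simp: splx_def space_PiM)
  also have "\<dots> \<in> sets (Pi\<^sub>M I (\<lambda>_. lborel))"
    using \<open>finite I\<close> by measurable
  finally have [measurable]: "splx I s \<inter> space (Pi\<^sub>M I (\<lambda>_. lborel)) \<in> sets (Pi\<^sub>M I (\<lambda>_. lborel))" .
  have "(\<lambda>v. indicator (splx I s \<inter> space (Pi\<^sub>M I (\<lambda>_. lborel))) v * (s - sum v I) powr (a-1) * (\<Prod>j\<in>I. v j powr (b j - 1)) :: real)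
     \<in> borel_measurable (PiM I (\<lambda>_. lborel))"
    using \<open>finite I\<close> by measurable
  then have "(\<lambda>v. dirf I a b s v) \<in> borel_measurable (PiM I (\<lambda>_. lborel))"
    by (rule measurable_cong[THEN iffD1, rotated]) (auto simp: dirf_def indicator_def)
  then show ?thesis by measurable
qed

lemma dirichlet:
  fixes I :: "'a set" and a :: real and b :: "'a \<Rightarrow> real"
  assumes "finite I" "a > 0" "\<And>j. j \<in> I \<Longrightarrow> b j > 0"
  shows "s \<ge> 0 \<Longrightarrow> (\<integral>\<^sup>+v. ennreal (dirf I a b s v) \<partial>PiM I (\<lambda>_. lborel))
     = ennreal (s powr (a + sum b I - 1) * (Gamma a * (\<Prod>j\<in>I. Gamma (b j)) / Gamma (a + sum b I)))"
  using assms(1,3)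
proof (induction I arbitrary: s rule: finite_induct)
  case (empty s)
  have "(\<integral>\<^sup>+v. ennreal (dirf {} a b s v) \<partial>PiM {} (\<lambda>_. lborel)) = ennreal (dirf {} a b s (\<lambda>_. undefined))"
    by (simp add: PiM_empty nn_integral_count_space_finite)
  also have "dirf {} a b s (\<lambda>_. undefined) = s powr (a-1)"
    using empty by (simp add: dirf_def splx_def)
  moreover have "Gamma a \<noteq> 0" using Gamma_real_pos[OF \<open>a > 0\<close>] by simp
  ultimately show ?case by simp
next
  case (insert j0 I s)
  interpret product_sigma_finite "\<lambda>_. lborel" by standard
  define B where "B = sum b I"
  define K where "K = Gamma a * (\<Prod>j\<in>I. Gamma (b j)) / Gamma (a + B)"
  have bpos: "\<And>j. j \<in> I \<Longrightarrow> b j > 0" using insert by auto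
  have B0: "B \<ge> 0" unfolding B_def using bpos by (intro sum_nonneg) (auto intro: less_imp_le)
  have bj0: "b j0 > 0" using insert by auto
  have K0: "K \<ge> 0" unfolding K_def using \<open>a > 0\<close> B0 bpos
    by (intro divide_nonneg_nonneg mult_nonneg_nonneg prod_nonneg) (auto intro: less_imp_le)
  have "(\<integral>\<^sup>+v. ennreal (dirf (insert j0 I) a b s v) \<partial>PiM (insert j0 I) (\<lambda>_. lborel))
     = (\<integral>\<^sup>+y. \<integral>\<^sup>+x. ennreal (dirf (insert j0 I) a b s (x(j0:=y))) \<partial>PiM I (\<lambda>_. lborel) \<partial>lborel)"
    using insert.hyps by (intro product_nn_integral_insert_rev) auto
  also have "\<dots> = (\<integral>\<^sup>+y. \<integral>\<^sup>+x. ennreal (indicator {0..s} y * y powr (b j0 - 1)) * ennreal (dirf I a b (s-y) x) \<partial>PiM I (\<lambda>_. lborel) \<partial>lborel)"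
  proof (intro nn_integral_cong)
    fix y :: real and x :: "'a \<Rightarrow> real"
    have su: "sum (x(j0:=y)) (insert j0 I) = y + sum x I"
    proof -
      have "(\<Sum>j\<in>I. (x(j0:=y)) j) = sum x I" using insert.hyps by (intro sum.cong) auto
      then show ?thesis using insert.hyps by simp
    qed
    have pr: "(\<Prod>j\<in>insert j0 I. (x(j0:=y)) j powr (b j - 1)) = y powr (b j0 - 1) * (\<Prod>j\<in>I. x j powr (b j - 1))"
    proof -
      have "(\<Prod>j\<in>I. (x(j0:=y)) j powr (b j - 1)) = (\<Prod>j\<in>I. x j powr (b j - 1))" using insert.hyps by (intro prod.cong) auto
      then show ?thesis using insert.hyps by simp
    qed
    have ind: "indicator (splx (insert j0 I) s) (x(j0:=y)) = (indicator {0..s} y * indicator (splx I (s-y)) x :: real)"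
      using splx_step[OF insert.hyps(2,1), of x y s] by (auto simp: indicator_def)
    have "dirf (insert j0 I) a b s (x(j0:=y)) = (indicator {0..s} y * y powr (b j0 - 1)) * dirf I a b (s-y) x"
      unfolding dirf_def su pr ind by (simp add: algebra_simps)
    moreover have "indicator {0..s} y * y powr (b j0 - 1) \<ge> 0" by (simp add: indicator_def)
    ultimately show "ennreal (dirf (insert j0 I) a b s (x(j0:=y))) = ennreal (indicator {0..s} y * y powr (b j0 - 1)) * ennreal (dirf I a b (s-y) x)"
      by (simp add: ennreal_mult dirf_nonneg)
  qed
  also have "\<dots> = (\<integral>\<^sup>+y. ennreal (indicator {0..s} y * y powr (b j0 - 1)) * (\<integral>\<^sup>+x. ennreal (dirf I a b (s-y) x) \<partial>PiM I (\<lambda>_. lborel)) \<partial>lborel)"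
    using insert.hyps by (intro nn_integral_cong nn_integral_cmult) auto
  also have "\<dots> = (\<integral>\<^sup>+y. ennreal (indicator {0..s} y * y powr (b j0 - 1) * (s-y) powr (b j0 + (a + B) - 1 - b j0)) * ennreal K \<partial>lborel)"
  proof (intro nn_integral_cong)
    fix y
    show "ennreal (indicator {0..s} y * y powr (b j0 - 1)) * (\<integral>\<^sup>+x. ennreal (dirf I a b (s-y) x) \<partial>PiM I (\<lambda>_. lborel))
        = ennreal (indicator {0..s} y * y powr (b j0 - 1) * (s-y) powr (b j0 + (a + B) - 1 - b j0)) * ennreal K"
    proof (cases "y \<in> {0..s}")
      case True
      then have "s - y \<ge> 0" by auto
      from insert.IH[OF this bpos] have "(\<integral>\<^sup>+x. ennreal (dirf I a b (s-y) x) \<partial>PiM I (\<lambda>_. lborel))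
          = ennreal ((s-y) powr (a + B - 1) * K)" by (simp add: B_def K_def)
      moreover have "b j0 + (a + B) - 1 - b j0 = a + B - 1" by simp
      ultimately show ?thesis using True K0 \<open>s - y \<ge> 0\<close>
        by (simp add: ennreal_mult[symmetric] mult.assoc add_diff_eq)
    next
      case False
      then show ?thesis by simp
    qed
  qed
  also have "\<dots> = (\<integral>\<^sup>+y. ennreal (indicator {0..s} y * y powr (b j0 - 1) * (s-y) powr (b j0 + (a + B) - 1 - b j0)) \<partial>lborel) * ennreal K"
    by (intro nn_integral_multc) auto
  also have "(\<integral>\<^sup>+y. ennreal (indicator {0..s} y * y powr (b j0 - 1) * (s-y) powr (b j0 + (a + B) - 1 - b j0)) \<partial>lborel)
      = ennreal (s powr (b j0 + (a + B) - 1) * Beta (b j0) (a + B))"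
    using beta_scaled[OF bj0, of "a+B" s] \<open>a > 0\<close> B0 insert.prems by (simp add: add_diff_eq)
  also have "ennreal (s powr (b j0 + (a + B) - 1) * Beta (b j0) (a + B)) * ennreal K
      = ennreal (s powr (a + sum b (insert j0 I) - 1) * (Gamma a * (\<Prod>j\<in>insert j0 I. Gamma (b j)) / Gamma (a + sum b (insert j0 I))))"
  proof -
    have G: "Gamma (a + B) \<noteq> 0" using \<open>a > 0\<close> B0 by (intro less_imp_neq[symmetric] Gamma_real_pos) simp
    have "Beta (b j0) (a + B) * K = Gamma a * (\<Prod>j\<in>insert j0 I. Gamma (b j)) / Gamma (a + sum b (insert j0 I))"
      using insert.hyps G unfolding K_def B_def Beta_altdef rGamma_inverse_Gamma
      by (simp add: field_simps sum.insert prod.insert)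
    moreover have "Beta (b j0) (a + B) \<ge> 0" using bj0 \<open>a > 0\<close> B0 by (simp add: Beta_altdef rGamma_inverse_Gamma)
    moreover have e: "b j0 + (a + B) - 1 = a + sum b (insert j0 I) - 1" using insert.hyps by (simp add: B_def)
    ultimately show ?thesis using K0 unfolding e by (simp add: ennreal_mult[symmetric] mult.assoc)
  qed
  finally show ?case .
qed



lemma poch_prod_expand:
  fixes x :: real and q :: "nat \<Rightarrow> nat"
  shows "(\<Prod>i\<in>{1..d}. pochhammer x (q i)) = (\<Sum>h\<in>{0..(sum q {1..d})}. real (stirling_multi d q h) * x ^ h)"
proof -
  define P where "P = PiE {1..d} (\<lambda>i. {0..q i})"
  have fP: "finite P" unfolding P_def by (intro finite_PiE) auto
  have "(\<Prod>i\<in>{1..d}. pochhammer x (q i)) = (\<Prod>i\<in>{1..d}. \<Sum>h\<in>{0..q i}. real (stirling (q i) h) * x ^ h)"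
    by (simp add: stirling_pochhammer atLeast0AtMost)
  also have "\<dots> = (\<Sum>hs\<in>P. \<Prod>i\<in>{1..d}. real (stirling (q i) (hs i)) * x ^ (hs i))"
    unfolding P_def by (intro prod_sum_PiE) auto
  also have "\<dots> = (\<Sum>hs\<in>P. real (\<Prod>i\<in>{1..d}. stirling (q i) (hs i)) * x ^ (sum hs {1..d}))"
    by (simp add: prod.distrib power_sum)
  also have "\<dots> = (\<Sum>h\<in>{0..(sum q {1..d})}. \<Sum>hs\<in>{hs \<in> P. sum hs {1..d} = h}. real (\<Prod>i\<in>{1..d}. stirling (q i) (hs i)) * x ^ (sum hs {1..d}))"
  proof (rule sum.group[symmetric, OF fP])
    show "finite {0..(sum q {1..d})}" by simp
    show "(\<lambda>hs. sum hs {1..d}) ` P \<subseteq> {0..(sum q {1..d})}"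
      unfolding P_def by (auto intro!: sum_mono simp: PiE_def Pi_def)
  qed
  also have "\<dots> = (\<Sum>h\<in>{0..(sum q {1..d})}. real (stirling_multi d q h) * x ^ h)"
    unfolding stirling_multi_def P_def by (intro sum.cong refl) (simp add: sum_distrib_right)
  finally show ?thesis .
qed

lemma stirling_multi_zero:
  assumes "h < (\<Sum>i\<in>{1..d}. min 1 (q i))"
  shows "stirling_multi d q h = 0"
  unfolding stirling_multi_def
proof (intro sum.neutral ballI)
  fix hs assume hs: "hs \<in> {hs \<in> PiE {1..d} (\<lambda>i. {0..q i}). (\<Sum>i\<in>{1..d}. hs i) = h}"
  show "(\<Prod>i\<in>{1..d}. stirling (q i) (hs i)) = 0"
  proof (rule ccontr)
    assume "(\<Prod>i\<in>{1..d}. stirling (q i) (hs i)) \<noteq> 0"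
    then have nz: "\<And>i. i \<in> {1..d} \<Longrightarrow> stirling (q i) (hs i) \<noteq> 0" by auto
    have "\<And>i. i \<in> {1..d} \<Longrightarrow> min 1 (q i) \<le> hs i"
    proof -
      fix i assume i: "i \<in> {1..d}"
      show "min 1 (q i) \<le> hs i"
      proof (cases "hs i = 0")
        case True
        with nz[OF i] have "q i = 0" by (cases "q i") auto
        then show ?thesis by simp
      qed simp
    qed
    then have "(\<Sum>i\<in>{1..d}. min 1 (q i)) \<le> (\<Sum>i\<in>{1..d}. hs i)" by (intro sum_mono)
    with hs assms show False by simp
  qed
qed

lemma inv_pow_powr:
  fixes v :: real assumes "v \<ge> 0" "h \<ge> 1"
  shows "inverse v * v ^ h = v powr (real h - 1)"
proof (cases "v = 0")
  case False
  with assms have v: "v > 0" by simp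
  have "v powr (real h - 1) = v powr real h / v" using v by (simp add: powr_diff)
  also have "\<dots> = v ^ h / v" using v by (simp add: powr_realpow)
  finally show ?thesis by (simp add: field_simps)
qed simp

lemma col_expand:
  fixes t v :: real and q :: "nat \<Rightarrow> nat"
  assumes "v \<ge> 0" "1 \<le> (\<Sum>i\<in>{1..d}. min 1 (q i))"
  shows "inverse v * (\<Prod>i\<in>{1..d}. pochhammer (t * v) (q i))
    = (\<Sum>h\<in>{(\<Sum>i\<in>{1..d}. min 1 (q i))..(sum q {1..d})}. real (stirling_multi d q h) * t^h * v powr (real h - 1))"
proof -
  define m where "m = (\<Sum>i\<in>{1..d}. min 1 (q i))"
  have "(\<Prod>i\<in>{1..d}. pochhammer (t * v) (q i)) = (\<Sum>h\<in>{0..(sum q {1..d})}. real (stirling_multi d q h) * (t * v) ^ h)"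
    by (rule poch_prod_expand)
  also have "\<dots> = (\<Sum>h\<in>{m..(sum q {1..d})}. real (stirling_multi d q h) * (t * v) ^ h)"
  proof (rule sum.mono_neutral_right)
    show "\<forall>h\<in>{0..(sum q {1..d})} - {m..(sum q {1..d})}. real (stirling_multi d q h) * (t * v) ^ h = 0"
    proof
      fix h assume "h \<in> {0..(sum q {1..d})} - {m..(sum q {1..d})}"
      then have "h < m" by auto
      then show "real (stirling_multi d q h) * (t * v) ^ h = 0" unfolding m_def by (simp add: stirling_multi_zero)
    qed
  qed (auto simp: m_def)
  finally have "inverse v * (\<Prod>i\<in>{1..d}. pochhammer (t * v) (q i)) =
     (\<Sum>h\<in>{m..(sum q {1..d})}. real (stirling_multi d q h) * t^h * (inverse v * v ^ h))"
    by (simp add: sum_distrib_left power_mult_distrib algebra_simps)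
  also have "\<dots> = (\<Sum>h\<in>{m..(sum q {1..d})}. real (stirling_multi d q h) * t^h * v powr (real h - 1))"
    using assms by (intro sum.cong refl) (simp add: inv_pow_powr m_def)
  finally show ?thesis by (simp add: m_def)
qed



lemma reorder1: "(a::real) * e * q * r * s = (a * e * r) * q * s" by (simp add: mult_ac)
lemma reorder2: "(p::real) * q * (n * tt * w) = p * n * tt * (1 * q * w)" by (simp add: mult_ac)
lemma reorder3: "(g::real) \<noteq> 0 \<Longrightarrow> g * x / (p * g) = x / p" by simp
lemma reorder4: "(a::real) * n * tt * (gp / po) = a * (gp * n / po * tt)" by (simp add: mult_ac)

theorem mainTheorem19:
  fixes \<alpha> \<alpha>0 b0 :: real and nc :: "nat \<Rightarrow> nat \<Rightarrow> nat" and d k :: nat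
  assumes "\<alpha> > 0" and "\<alpha>0 > 0" and "b0 > 0" and "d \<ge> 1" and "k \<ge> 1"
    and "\<And>i. i \<in> {1..d} \<Longrightarrow> rowsum nc k i \<ge> 1"
    and "\<And>j. j \<in> {1..k} \<Longrightarrow> colsum nc d j \<ge> 1"
  shows "\<exists>C>0. \<forall>t>0.
    (\<integral>\<^sup>+ v. ennreal (joint_dens \<alpha> \<alpha>0 b0 nc d k t v) \<partial>(PiM {1..k} (\<lambda>_. lborel)))
      = ennreal (C * marg_dens \<alpha> \<alpha>0 b0 nc d k t)"
proof -
  note a0 = \<open>\<alpha>0 > 0\<close>
  define m where "m j = colmin nc d j" for j
  define n where "n j = colsum nc d j" for j
  define N where "N j h = real (stirling_multi d (\<lambda>i. nc i j) h)" for j h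
  define H where "H = PiE {1..k} (\<lambda>j. {m j..n j})"
  define P where "P t = t powr (\<alpha>0 - 1) * exp (- (b0/\<alpha>) * t) * (\<Prod>i\<in>{1..d}. 1 / pochhammer t (rowsum nc k i))" for t
  have m1: "1 \<le> m j" if j: "j \<in> {1..k}" for j
  proof -
    have cs: "colsum nc d j \<ge> 1" using assms(7)[OF j] .
    have "\<exists>i\<in>{1..d}. nc i j \<ge> 1"
    proof (rule ccontr)
      assume "\<not> (\<exists>i\<in>{1..d}. nc i j \<ge> 1)"
      then have "\<forall>i\<in>{1..d}. nc i j = 0" by auto
      then have "colsum nc d j = 0" unfolding colsum_def by simp
      with cs show False by simp
    qed
    then obtain i where i: "i \<in> {1..d}" "nc i j \<ge> 1" by blast
    have "min 1 (nc i j) \<le> (\<Sum>i\<in>{1..d}. min 1 (nc i j))"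
      by (rule member_le_sum) (use i in auto)
    with i show ?thesis by (simp add: m_def colmin_def)
  qed
  have fH: "finite H" unfolding H_def by (intro finite_PiE) auto
  have hpos: "1 \<le> hs j" if "hs \<in> H" "j \<in> {1..k}" for hs j
    using that m1[of j] unfolding H_def by (auto simp: PiE_def Pi_def)
  have jd: "joint_dens \<alpha> \<alpha>0 b0 nc d k t v = (\<Sum>hs\<in>H. P t * (\<Prod>j\<in>{1..k}. N j (hs j)) * t ^ (sum hs {1..k})
       * dirf {1..k} \<alpha>0 (\<lambda>j. real (hs j)) 1 v)" for t v
  proof (cases "(\<forall>j\<in>{1..k}. 0 \<le> v j) \<and> (\<Sum>j\<in>{1..k}. v j) \<le> 1")
    case True
    have "(\<Prod>j\<in>{1..k}. inverse (v j) * (\<Prod>i\<in>{1..d}. pochhammer (t * v j) (nc i j)))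
        = (\<Prod>j\<in>{1..k}. \<Sum>h\<in>{m j..n j}. N j h * t ^ h * v j powr (real h - 1))"
    proof (intro prod.cong refl)
      fix j assume j: "j \<in> {1..k}"
      show "inverse (v j) * (\<Prod>i\<in>{1..d}. pochhammer (t * v j) (nc i j)) = (\<Sum>h\<in>{m j..n j}. N j h * t ^ h * v j powr (real h - 1))"
        using col_expand[where v="v j" and d=d and q="\<lambda>i. nc i j" and t=t] True m1[OF j] j
        by (simp add: m_def n_def N_def colmin_def colsum_def)
    qed
    also have "\<dots> = (\<Sum>hs\<in>H. \<Prod>j\<in>{1..k}. N j (hs j) * t ^ (hs j) * v j powr (real (hs j) - 1))"
      unfolding H_def by (intro prod_sum_PiE) auto
    also have "\<dots> = (\<Sum>hs\<in>H. (\<Prod>j\<in>{1..k}. N j (hs j)) * t ^ (sum hs {1..k}) * (\<Prod>j\<in>{1..k}. v j powr (real (hs j) - 1)))"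
      by (simp add: prod.distrib power_sum)
    finally have X: "(\<Prod>j\<in>{1..k}. inverse (v j) * (\<Prod>i\<in>{1..d}. pochhammer (t * v j) (nc i j))) = \<dots>" .
    have ind: "indicator (splx {1..k} 1) v = (1::real)" using True by (simp add: splx_def)
    have "joint_dens \<alpha> \<alpha>0 b0 nc d k t v = P t * (1 - (\<Sum>j\<in>{1..k}. v j)) powr (\<alpha>0 - 1)
        * (\<Prod>j\<in>{1..k}. inverse (v j) * (\<Prod>i\<in>{1..d}. pochhammer (t * v j) (nc i j)))"
      unfolding joint_dens_def if_P[OF True] P_def by (rule reorder1)
    also have "\<dots> = P t * (1 - (\<Sum>j\<in>{1..k}. v j)) powr (\<alpha>0 - 1) * (\<Sum>hs\<in>H. (\<Prod>j\<in>{1..k}. N j (hs j)) * t ^ (sum hs {1..k}) * (\<Prod>j\<in>{1..k}. v j powr (real (hs j) - 1)))"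
      by (simp only: X)
    also have "\<dots> = (\<Sum>hs\<in>H. P t * (\<Prod>j\<in>{1..k}. N j (hs j)) * t ^ (sum hs {1..k}) * dirf {1..k} \<alpha>0 (\<lambda>j. real (hs j)) 1 v)"
      unfolding sum_distrib_left dirf_def ind by (intro sum.cong refl) (rule reorder2)
    finally show ?thesis .
  next
    case False
    have ind: "indicator (splx {1..k} 1) v = (0::real)" using False by (simp add: splx_def)
    have j0: "joint_dens \<alpha> \<alpha>0 b0 nc d k t v = 0" unfolding joint_dens_def by (rule if_not_P[OF False])
    have "dirf {1..k} \<alpha>0 (\<lambda>j. real (hs j)) 1 v = 0" for hs unfolding dirf_def ind by simp
    then show ?thesis using j0 by simp
  qed
  show ?thesis
  proof (intro exI[of _ 1] conjI allI impI)
    show "(1::real) > 0" by simp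
    fix t :: real assume t: "t > 0"
    define cf where "cf hs = P t * (\<Prod>j\<in>{1..k}. N j (hs j)) * t ^ (sum hs {1..k})" for hs
    have Pnn: "P t \<ge> 0" unfolding P_def using t
      by (intro mult_nonneg_nonneg prod_nonneg) (auto intro: less_imp_le pochhammer_pos)
    have cfnn: "cf hs \<ge> 0" for hs unfolding cf_def N_def using Pnn t
      by (intro mult_nonneg_nonneg prod_nonneg) auto
    define D where "D hs = Gamma \<alpha>0 * (\<Prod>j\<in>{1..k}. Gamma (real (hs j))) / Gamma (\<alpha>0 + (\<Sum>j\<in>{1..k}. real (hs j)))" for hs
    have Dnn: "D hs \<ge> 0" if hs: "hs \<in> H" for hs
    proof -
      have g1: "Gamma (real (hs j)) > 0" if "j \<in> {1..k}" for j
        using hpos[OF hs that] by (intro Gamma_real_pos) simp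
      have g2: "Gamma (\<alpha>0 + (\<Sum>j\<in>{1..k}. real (hs j))) > 0"
        by (intro Gamma_real_pos add_pos_nonneg a0 sum_nonneg) auto
      show ?thesis unfolding D_def using g1 g2 Gamma_real_pos[OF a0]
        by (intro divide_nonneg_nonneg mult_nonneg_nonneg prod_nonneg) (auto intro: less_imp_le)
    qed
    have "(\<integral>\<^sup>+ v. ennreal (joint_dens \<alpha> \<alpha>0 b0 nc d k t v) \<partial>(PiM {1..k} (\<lambda>_. lborel)))
        = (\<integral>\<^sup>+ v. (\<Sum>hs\<in>H. ennreal (cf hs) * ennreal (dirf {1..k} \<alpha>0 (\<lambda>j. real (hs j)) 1 v)) \<partial>(PiM {1..k} (\<lambda>_. lborel)))"
    proof (intro nn_integral_cong)
      fix v :: "nat \<Rightarrow> real"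
      have "ennreal (joint_dens \<alpha> \<alpha>0 b0 nc d k t v) = ennreal (\<Sum>hs\<in>H. cf hs * dirf {1..k} \<alpha>0 (\<lambda>j. real (hs j)) 1 v)"
        unfolding jd cf_def by simp
      also have "\<dots> = (\<Sum>hs\<in>H. ennreal (cf hs * dirf {1..k} \<alpha>0 (\<lambda>j. real (hs j)) 1 v))"
        using cfnn dirf_nonneg by (intro sum_ennreal[symmetric] mult_nonneg_nonneg)
      finally show "ennreal (joint_dens \<alpha> \<alpha>0 b0 nc d k t v) = (\<Sum>hs\<in>H. ennreal (cf hs) * ennreal (dirf {1..k} \<alpha>0 (\<lambda>j. real (hs j)) 1 v))"
        using cfnn dirf_nonneg by (metis (no_types, lifting) ennreal_mult sum.cong)
    qed
    also have "\<dots> = (\<Sum>hs\<in>H. \<integral>\<^sup>+ v. ennreal (cf hs) * ennreal (dirf {1..k} \<alpha>0 (\<lambda>j. real (hs j)) 1 v) \<partial>(PiM {1..k} (\<lambda>_. lborel)))"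
      by (intro nn_integral_sum) simp
    also have "\<dots> = (\<Sum>hs\<in>H. ennreal (cf hs) * ennreal (D hs))"
    proof (intro sum.cong refl)
      fix hs assume hs: "hs \<in> H"
      have "(\<integral>\<^sup>+ v. ennreal (cf hs) * ennreal (dirf {1..k} \<alpha>0 (\<lambda>j. real (hs j)) 1 v) \<partial>(PiM {1..k} (\<lambda>_. lborel)))
         = ennreal (cf hs) * (\<integral>\<^sup>+ v. ennreal (dirf {1..k} \<alpha>0 (\<lambda>j. real (hs j)) 1 v) \<partial>(PiM {1..k} (\<lambda>_. lborel)))"
        by (intro nn_integral_cmult) simp
      also have "(\<integral>\<^sup>+ v. ennreal (dirf {1..k} \<alpha>0 (\<lambda>j. real (hs j)) 1 v) \<partial>(PiM {1..k} (\<lambda>_. lborel))) = ennreal (D hs)"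
        using dirichlet[of "{1..k}" \<alpha>0 "\<lambda>j. real (hs j)" 1] a0 hpos[OF hs] unfolding D_def by force
      finally show "(\<integral>\<^sup>+ v. ennreal (cf hs) * ennreal (dirf {1..k} \<alpha>0 (\<lambda>j. real (hs j)) 1 v) \<partial>(PiM {1..k} (\<lambda>_. lborel)))
         = ennreal (cf hs) * ennreal (D hs)" .
    qed
    also have "\<dots> = ennreal (\<Sum>hs\<in>H. cf hs * D hs)"
      using cfnn Dnn by (subst sum_ennreal[symmetric]) (auto simp: ennreal_mult intro!: sum.cong)
    also have "(\<Sum>hs\<in>H. cf hs * D hs) = 1 * marg_dens \<alpha> \<alpha>0 b0 nc d k t"
    proof -
      have G0: "Gamma \<alpha>0 \<noteq> 0" using Gamma_real_pos[OF a0] by linarith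
      have pg: "Gamma (\<alpha>0 + real h) = pochhammer \<alpha>0 h * Gamma \<alpha>0" for h
      proof -
        have "\<alpha>0 \<notin> \<int>\<^sub>\<le>\<^sub>0" using a0 by (auto elim!: nonpos_Ints_cases)
        from pochhammer_Gamma[OF this, of h] show ?thesis using G0 by (simp add: field_simps)
      qed
      have pnz: "pochhammer \<alpha>0 h \<noteq> 0" for h using pochhammer_pos[OF a0, of h] by simp
      define M where "M = (\<Sum>j\<in>{1..k}. colmin nc d j)"
      define T where "T = (\<Sum>i\<in>{1..d}. rowsum nc k i)"
      define g where "g hs = (\<Prod>j\<in>{1..k}. Gamma (real (hs j)) * N j (hs j)) / pochhammer \<alpha>0 (sum hs {1..k}) * t ^ (sum hs {1..k})" for hs
      have cc: "coeff_c nc d k h = (\<Sum>hs\<in>{hs\<in>H. sum hs {1..k} = h}. \<Prod>j\<in>{1..k}. Gamma (real (hs j)) * N j (hs j))" for h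
        unfolding coeff_c_def H_def m_def n_def N_def by simp
      have "marg_dens \<alpha> \<alpha>0 b0 nc d k t = P t * (\<Sum>h\<in>{M..T}. coeff_c nc d k h / pochhammer \<alpha>0 h * t ^ h)"
        unfolding marg_dens_def P_def M_def T_def by simp
      also have "(\<Sum>h\<in>{M..T}. coeff_c nc d k h / pochhammer \<alpha>0 h * t ^ h) = (\<Sum>h\<in>{M..T}. \<Sum>hs\<in>{hs\<in>H. sum hs {1..k} = h}. g hs)"
        unfolding cc g_def by (intro sum.cong refl) (simp add: sum_divide_distrib sum_distrib_right)
      also have "\<dots> = (\<Sum>hs\<in>H. g hs)"
      proof (rule sum.group[OF fH])
        show "finite {M..T}" by simp
        show "(\<lambda>hs. sum hs {1..k}) ` H \<subseteq> {M..T}"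
        proof
          fix x assume "x \<in> (\<lambda>hs. sum hs {1..k}) ` H"
          then obtain hs where hs: "hs \<in> H" "x = sum hs {1..k}" by auto
          have "M \<le> sum hs {1..k}" unfolding M_def using hs(1)
            by (intro sum_mono) (auto simp: H_def m_def PiE_def Pi_def)
          moreover have "sum hs {1..k} \<le> (\<Sum>j\<in>{1..k}. n j)" using hs(1)
            by (intro sum_mono) (auto simp: H_def PiE_def Pi_def)
          moreover have "(\<Sum>j\<in>{1..k}. n j) = T" unfolding T_def n_def colsum_def rowsum_def
            by (rule sum.swap)
          ultimately show "x \<in> {M..T}" using hs by simp
        qed
      qed
      finally have md: "marg_dens \<alpha> \<alpha>0 b0 nc d k t = P t * (\<Sum>hs\<in>H. g hs)" .
      have "cf hs * D hs = P t * g hs" for hs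
      proof -
        have sr: "(\<Sum>j\<in>{1..k}. real (hs j)) = real (sum hs {1..k})" by simp
        have e: "D hs = (\<Prod>j\<in>{1..k}. Gamma (real (hs j))) / pochhammer \<alpha>0 (sum hs {1..k})"
          unfolding D_def sr pg using G0 by (rule reorder3)
        show ?thesis unfolding e cf_def g_def prod.distrib by (rule reorder4)
      qed
      then show ?thesis unfolding md by (simp add: sum_distrib_left)
    qed
    finally show "(\<integral>\<^sup>+ v. ennreal (joint_dens \<alpha> \<alpha>0 b0 nc d k t v) \<partial>(PiM {1..k} (\<lambda>_. lborel)))
      = ennreal (1 * marg_dens \<alpha> \<alpha>0 b0 nc d k t)" .
  qed
qed

end
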